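(* Let $\mathcal M=(V,E,c_V,L,\Theta)$ be a molecular graph with $V=\{v_1,\dots,v_n\}$, and suppose there exists $(v,w_1,w_2)\in E_2$ with $\Theta(v,w_1,w_2)\neq\pi$. Let $SO(3)$ act on $\mathcal C^P_{\mathcal M}$ by $A\cdot\varphi=A\circ\varphi$, let $\mathcal C^{int}_{\mathcal M}=\mathcal C^P_{\mathcal M}/SO(3)$ carry the quotient topology, and let $q:\mathcal C^P_{\mathcal M}\to\mathcal C^{int}_{\mathcal M}$ be the quotient map. Then $q$ is a principal $SO(3)$-bundle, and this bundle is trivial: there is an $SO(3)$-equivariant homeomorphism $\mathcal C^P_{\mathcal M}\cong \mathcal C^{int}_{\mathcal M}\times SO(3)$ commuting with the projections to $\mathcal C^{int}_{\mathcal M}$ (equivalently, $q$ admits a continuous section).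
   Context: A molecular graph is a tuple $\mathcal M=(V,E,c_V,L,\Theta)$ where: $V$ is a finite set; $E\subseteq V\times V$ satisfies $(v,v)\notin E$ and $(v,w)\in E\iff (w,v)\in E$; $c_V:V\to\mathbb N$ (the atomic number of the atom at each vertex); $L:E\to(0,\infty)$ with $L(v,w)=L(w,v)$; and $\Theta:E_2\to(0,\pi]$ with $\Theta(v,w_1,w_2)=\Theta(v,w_2,w_1)$, where $E_2=\{(v,w_1,w_2)\in V^3: (v,w_1),(v,w_2)\in E,\ w_1\neq w_2\}$. The geometric realisation of $\mathcal M$ is the metric graph obtained by gluing a segment $[0,L(e)]$ for each edge $e$ along the vertices. A configuration of $\mathcal M$ is an injective continuous map $\varphi$ from the geometric realisation into $\mathbb R^3$ such that (i) the restriction of $\varphi$ to each edge is an isometric embedding, and (ii) for each $(v,w_1,w_2)\in E_2$ the angle at $\varphi(v)$ between the segments to $\varphi(w_1)$ and $\varphi(w_2)$ equals $\Theta(v,w_1,w_2)$. A configuration is identified with $(\varphi(v_1),\dots,\varphi(v_n))\in\mathbb R^{3n}$. Define $\mathcal C^P_{\mathcal M}$ as the set of configurations satisfying $\sum_{i=1}^n c_V(v_i)\varphi(v_i)=0$, with the subspace topology from $\mathbb R^{3n}$. A principal $SO(3)$-bundle here means: $SO(3)$ acts continuously on the total space, the base is the orbit space with the quotient map as projection, the map $(x,g)\mapsto(x,g\cdot x)$ is a homeomorphism onto its image, and the projection is locally trivial by $SO(3)$-equivariant trivialisations. *)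

theory Defs
  imports "HOL-Analysis.Analysis"
begin

text \<open>Molecular graph with vertex set V = UNIV of a finite type 'v.
  E: directed-pair encoding of the symmetric edge relation,
  c: atomic numbers, L: bond lengths, Th: bond angles.\<close>

definition E2 :: "('v \<times> 'v) set \<Rightarrow> ('v \<times> 'v \<times> 'v) set" where
  "E2 E = {(v, w1, w2). (v, w1) \<in> E \<and> (v, w2) \<in> E \<and> w1 \<noteq> w2}"

definition molecular_graph ::
  "('v \<times> 'v) set \<Rightarrow> ('v \<times> 'v \<Rightarrow> real) \<Rightarrow> ('v \<times> 'v \<times> 'v \<Rightarrow> real) \<Rightarrow> bool" where
  "molecular_graph E L Th \<longleftrightarrow>
     (\<forall>v. (v, v) \<notin> E) \<and>
     (\<forall>v w. (v, w) \<in> E \<longleftrightarrow> (w, v) \<in> E) \<and>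
     (\<forall>(v, w) \<in> E. L (v, w) > 0 \<and> L (v, w) = L (w, v)) \<and>
     (\<forall>(v, w1, w2) \<in> E2 E. 0 < Th (v, w1, w2) \<and> Th (v, w1, w2) \<le> pi
                          \<and> Th (v, w1, w2) = Th (v, w2, w1))"

definition vec_angle :: "real^3 \<Rightarrow> real^3 \<Rightarrow> real" where
  "vec_angle u w = arccos ((u \<bullet> w) / (norm u * norm w))"

text \<open>A configuration: vertex positions x together with the edge maps gamma v w,
  parametrising the segment [0, L(v,w)] of edge (v,w); the segment of (w,v) is the
  same segment traversed backwards (gluing). Conditions: (i) isometric embedding of
  each edge, glued at the vertices; injectivity of the induced map on the geometric
  realisation (vertices, and interior points of edges modulo the reversal
  identification); (ii) the bond angles.\<close>
definition is_configuration ::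
  "('v::finite \<times> 'v) set \<Rightarrow> ('v \<times> 'v \<Rightarrow> real) \<Rightarrow> ('v \<times> 'v \<times> 'v \<Rightarrow> real)
   \<Rightarrow> (real^3)^'v \<Rightarrow> ('v \<Rightarrow> 'v \<Rightarrow> real \<Rightarrow> real^3) \<Rightarrow> bool" where
  "is_configuration E L Th x \<gamma> \<longleftrightarrow>
     (\<forall>(v, w) \<in> E.
        continuous_on {0..L (v, w)} (\<gamma> v w) \<and>
        (\<forall>s \<in> {0..L (v, w)}. \<forall>t \<in> {0..L (v, w)}. dist (\<gamma> v w s) (\<gamma> v w t) = \<bar>s - t\<bar>) \<and>
        \<gamma> v w 0 = x $ v \<and> \<gamma> v w (L (v, w)) = x $ w \<and>
        (\<forall>t \<in> {0..L (v, w)}. \<gamma> w v t = \<gamma> v w (L (v, w) - t))) \<and>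
     inj (\<lambda>v. x $ v) \<and>
     (\<forall>(v, w) \<in> E. \<forall>t \<in> {0<..<L (v, w)}. \<forall>u. \<gamma> v w t \<noteq> x $ u) \<and>
     (\<forall>(v, w) \<in> E. \<forall>(v', w') \<in> E. \<forall>s \<in> {0<..<L (v, w)}. \<forall>t \<in> {0<..<L (v', w')}.
        \<gamma> v w s = \<gamma> v' w' t \<longrightarrow>
          (v = v' \<and> w = w' \<and> s = t) \<or> (v = w' \<and> w = v' \<and> s = L (v', w') - t)) \<and>
     (\<forall>(v, w1, w2) \<in> E2 E.
        vec_angle (x $ w1 - x $ v) (x $ w2 - x $ v) = Th (v, w1, w2))"

definition CP ::
  "('v::finite \<times> 'v) set \<Rightarrow> ('v \<Rightarrow> nat) \<Rightarrow> ('v \<times> 'v \<Rightarrow> real) \<Rightarrow> ('v \<times> 'v \<times> 'v \<Rightarrow> real)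
   \<Rightarrow> ((real^3)^'v) set" where
  "CP E c L Th = {x. (\<exists>\<gamma>. is_configuration E L Th x \<gamma>) \<and>
                     (\<Sum>v\<in>UNIV. real (c v) *\<^sub>R (x $ v)) = 0}"

definition SO3 :: "(real^3^3) set" where
  "SO3 = {A. orthogonal_matrix A \<and> det A = 1}"

definition act :: "real^3^3 \<Rightarrow> (real^3)^'v \<Rightarrow> (real^3)^'v" where
  "act A x = (\<chi> v. A *v (x $ v))"

definition orbit :: "(real^3)^'v \<Rightarrow> ((real^3)^'v) set" where
  "orbit x = {act A x | A. A \<in> SO3}"

definition orbit_space_topology :: "((real^3)^'v) set \<Rightarrow> ((real^3)^'v) set topology" where
  "orbit_space_topology S = topology (\<lambda>U. U \<subseteq> orbit ` S \<and>
      openin (top_of_set S) {x \<in> S. orbit x \<in> U})"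

lemma istopology_orbit_space:
  "istopology (\<lambda>U. U \<subseteq> orbit ` S \<and> openin (top_of_set S) {x \<in> S. orbit x \<in> U})"
  unfolding istopology_def
proof (rule conjI; intro allI impI)
  fix U V assume a: "U \<subseteq> orbit ` S \<and> openin (top_of_set S) {x \<in> S. orbit x \<in> U}"
    "V \<subseteq> orbit ` S \<and> openin (top_of_set S) {x \<in> S. orbit x \<in> V}"
  have "{x \<in> S. orbit x \<in> U \<inter> V} = {x \<in> S. orbit x \<in> U} \<inter> {x \<in> S. orbit x \<in> V}" by auto
  moreover have "openin (top_of_set S) ({x \<in> S. orbit x \<in> U} \<inter> {x \<in> S. orbit x \<in> V})"
    using a by (intro openin_Int) auto
  ultimately show "U \<inter> V \<subseteq> orbit ` S \<and> openin (top_of_set S) {x \<in> S. orbit x \<in> U \<inter> V}"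
    using a by auto
next
  fix K assume a: "\<forall>U\<in>K. U \<subseteq> orbit ` S \<and> openin (top_of_set S) {x \<in> S. orbit x \<in> U}"
  have "{x \<in> S. orbit x \<in> \<Union>K} = (\<Union>U\<in>K. {x \<in> S. orbit x \<in> U})" by auto
  moreover have "openin (top_of_set S) (\<Union>U\<in>K. {x \<in> S. orbit x \<in> U})"
    using a by (intro openin_Union) auto
  ultimately show "\<Union>K \<subseteq> orbit ` S \<and> openin (top_of_set S) {x \<in> S. orbit x \<in> \<Union>K}"
    using a by auto
qed

definition principal_SO3_bundle ::
  "'x topology \<Rightarrow> (real^3^3 \<Rightarrow> 'x \<Rightarrow> 'x) \<Rightarrow> 'b topology \<Rightarrow> ('x \<Rightarrow> 'b) \<Rightarrow> bool" where
  "principal_SO3_bundle X a B q \<longleftrightarrow>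
     \<comment> \<open>continuous group action\<close>
     (\<forall>A\<in>SO3. \<forall>x\<in>topspace X. a A x \<in> topspace X) \<and>
     (\<forall>x\<in>topspace X. a (mat 1) x = x) \<and>
     (\<forall>A\<in>SO3. \<forall>A'\<in>SO3. \<forall>x\<in>topspace X. a (A ** A') x = a A (a A' x)) \<and>
     continuous_map (prod_topology (top_of_set SO3) X) X (\<lambda>(A, x). a A x) \<and>
     \<comment> \<open>the base is the orbit space, q the quotient map\<close>
     quotient_map X B q \<and>
     (\<forall>x\<in>topspace X. \<forall>y\<in>topspace X. q x = q y \<longleftrightarrow> (\<exists>A\<in>SO3. y = a A x)) \<and>
     \<comment> \<open>(x, g) \<mapsto> (x, g x) is a homeomorphism onto its image\<close>
     homeomorphic_map (prod_topology X (top_of_set SO3))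
        (subtopology (prod_topology X X) ((\<lambda>(x, A). (x, a A x)) ` (topspace X \<times> SO3)))
        (\<lambda>(x, A). (x, a A x)) \<and>
     \<comment> \<open>local triviality by equivariant trivialisations\<close>
     (\<forall>b\<in>topspace B. \<exists>U. openin B U \<and> b \<in> U \<and>
        (\<exists>h. homeomorphic_map (subtopology X {x \<in> topspace X. q x \<in> U})
                 (prod_topology (subtopology B U) (top_of_set SO3)) h \<and>
             (\<forall>x \<in> topspace X. q x \<in> U \<longrightarrow>
                 fst (h x) = q x \<and> (\<forall>A\<in>SO3. h (a A x) = (q x, A ** snd (h x))))))"

definition trivial_SO3_bundle ::
  "'x topology \<Rightarrow> (real^3^3 \<Rightarrow> 'x \<Rightarrow> 'x) \<Rightarrow> 'b topology \<Rightarrow> ('x \<Rightarrow> 'b) \<Rightarrow> bool" where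
  "trivial_SO3_bundle X a B q \<longleftrightarrow>
     (\<exists>h. homeomorphic_map X (prod_topology B (top_of_set SO3)) h \<and>
          (\<forall>x \<in> topspace X. fst (h x) = q x \<and> (\<forall>A\<in>SO3. h (a A x) = (q x, A ** snd (h x)))))"

end

theory Submission imports Defs begin

lemma orth_inner: "orthogonal_matrix A \<Longrightarrow> (A *v a) \<bullet> (A *v b) = a \<bullet> (b::real^'n)"
proof -
  assume "orthogonal_matrix A"
  hence "orthogonal_transformation (\<lambda>x. A *v x)"
    by (simp add: orthogonal_transformation_matrix)
  thus ?thesis by (simp add: orthogonal_transformation_def)
qed

lemma orth_norm: "orthogonal_matrix A \<Longrightarrow> norm (A *v a) = norm (a::real^'n)"
  by (simp add: norm_eq_sqrt_inner orth_inner)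

lemma SO3_transpose: "A \<in> SO3 \<Longrightarrow> transpose A \<in> SO3"
  by (simp add: SO3_def det_transpose)
lemma SO3_mul: "A \<in> SO3 \<Longrightarrow> B \<in> SO3 \<Longrightarrow> A ** B \<in> SO3"
  by (simp add: SO3_def det_mul orthogonal_matrix_mul)
lemma SO3_id: "mat 1 \<in> SO3"
  by (simp add: SO3_def orthogonal_matrix_id)
lemma SO3_tl: "A \<in> SO3 \<Longrightarrow> transpose A ** A = mat 1"
  by (simp add: SO3_def orthogonal_matrix_def)
lemma SO3_tr: "A \<in> SO3 \<Longrightarrow> A ** transpose A = mat 1"
  by (simp add: SO3_def orthogonal_matrix_def)

lemma act_id: "act (mat 1) x = x"
  by (simp add: act_def vec_eq_iff)
lemma act_act: "act A (act B x) = act (A ** B) x"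
  by (simp add: act_def vec_eq_iff matrix_vector_mul_assoc)
lemma act_nth: "act A x $ v = A *v (x $ v)"
  by (simp add: act_def)

lemma orbit_act: "A \<in> SO3 \<Longrightarrow> orbit (act A x) = orbit x"
proof -
  assume A: "A \<in> SO3"
  show ?thesis
  proof
    show "orbit (act A x) \<subseteq> orbit x"
      using A by (auto simp: orbit_def act_act intro: SO3_mul)
    show "orbit x \<subseteq> orbit (act A x)"
    proof
      fix y assume "y \<in> orbit x"
      then obtain B where B: "B \<in> SO3" "y = act B x" by (auto simp: orbit_def)
      have "y = act (B ** transpose A) (act A x)"
        using B A by (simp add: act_act matrix_mul_assoc[symmetric] SO3_tl)
      thus "y \<in> orbit (act A x)" using A B by (auto simp: orbit_def intro!: SO3_mul SO3_transpose)
    qed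
  qed
qed

lemma orbit_eq: "orbit x = orbit y \<longleftrightarrow> (\<exists>A\<in>SO3. y = act A x)"
proof
  assume "orbit x = orbit y"
  moreover have "y \<in> orbit y" using SO3_id by (force simp: orbit_def act_id)
  ultimately show "\<exists>A\<in>SO3. y = act A x" by (auto simp: orbit_def)
qed (auto simp: orbit_act)

lemma openin_orbit_space:
  "openin (orbit_space_topology S) U \<longleftrightarrow> U \<subseteq> orbit ` S \<and> openin (top_of_set S) {x \<in> S. orbit x \<in> U}"
  by (simp add: orbit_space_topology_def istopology_orbit_space)

lemma topspace_orbit_space: "topspace (orbit_space_topology S) = orbit ` S"
proof -
  have "{x \<in> S. orbit x \<in> orbit ` S} = S" by auto
  hence "openin (orbit_space_topology S) (orbit ` S)"
    by (simp add: openin_orbit_space)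
  hence "orbit ` S \<subseteq> topspace (orbit_space_topology S)" by (rule openin_subset)
  moreover have "topspace (orbit_space_topology S) \<subseteq> orbit ` S"
    by (auto simp: topspace_def openin_orbit_space)
  ultimately show ?thesis by blast
qed

lemma quotient_orbit: "quotient_map (top_of_set S) (orbit_space_topology S) orbit"
  unfolding quotient_map_def topspace_orbit_space
  by (auto simp: openin_orbit_space)

lemma cont_mm: "continuous_on T f \<Longrightarrow> continuous_on T g \<Longrightarrow> continuous_on T (\<lambda>t. f t ** (g t :: real^'n^'m))"
  unfolding matrix_matrix_mult_def
  by (intro continuous_intros)
lemma cont_mv: "continuous_on T f \<Longrightarrow> continuous_on T g \<Longrightarrow> continuous_on T (\<lambda>t. f t *v (g t :: real^'n))"
  unfolding matrix_vector_mult_def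
  by (intro continuous_intros)
lemma cont_tr: "continuous_on T f \<Longrightarrow> continuous_on T (\<lambda>t. transpose (f t :: real^'n^'m))"
  unfolding transpose_def
  by (intro continuous_intros)
lemma cont_act: "continuous_on T f \<Longrightarrow> continuous_on T g \<Longrightarrow> continuous_on T (\<lambda>t. act (f t) (g t :: (real^3)^'v))"
  unfolding act_def
  by (intro continuous_intros cont_mv)


lemma abstract_bundle:
  fixes S :: "((real^3)^'v) set" and F :: "(real^3)^'v \<Rightarrow> real^3^3"
  assumes Sact: "\<And>A x. A \<in> SO3 \<Longrightarrow> x \<in> S \<Longrightarrow> act A x \<in> S"
    and Fc: "continuous_on S F"
    and FS: "\<And>x. x \<in> S \<Longrightarrow> F x \<in> SO3"
    and Feq: "\<And>A x. A \<in> SO3 \<Longrightarrow> x \<in> S \<Longrightarrow> F (act A x) = A ** F x"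
  shows "principal_SO3_bundle (top_of_set S) act (orbit_space_topology S) orbit
       \<and> trivial_SO3_bundle (top_of_set S) act (orbit_space_topology S) orbit
       \<and> (\<exists>s. continuous_map (orbit_space_topology S) (top_of_set S) s
              \<and> (\<forall>b \<in> topspace (orbit_space_topology S). orbit (s b) = b))"
proof -
  let ?X = "top_of_set S" and ?B = "orbit_space_topology S" and ?G = "top_of_set SO3"
  define r where "r b = (SOME y. y \<in> S \<and> orbit y = b)" for b
  define s where "s b = act (transpose (F (r b))) (r b)" for b
  have s_orbit: "s (orbit x) = act (transpose (F x)) x" if x: "x \<in> S" for x
  proof -
    have "\<exists>y. y \<in> S \<and> orbit y = orbit x" using x by blast
    hence ry: "r (orbit x) \<in> S" "orbit (r (orbit x)) = orbit x"
      unfolding r_def by (metis (mono_tags, lifting) someI_ex)+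
    then obtain A where A: "A \<in> SO3" "r (orbit x) = act A x"
      using orbit_eq by metis
    have "s (orbit x) = act (transpose (A ** F x)) (act A x)"
      unfolding s_def A(2) using Feq[OF A(1) x] by simp
    also have "\<dots> = act (transpose (F x) ** (transpose A ** A)) x"
      by (simp add: act_act matrix_transpose_mul matrix_mul_assoc)
    also have "\<dots> = act (transpose (F x)) x" using A(1) by (simp add: SO3_tl)
    finally show ?thesis .
  qed
  have sS: "s (orbit x) \<in> S" and so: "orbit (s (orbit x)) = orbit x" if "x \<in> S" for x
    using that by (simp_all add: s_orbit Sact FS SO3_transpose orbit_act)
  have q: "quotient_map ?X ?B orbit" by (rule quotient_orbit)
  have tB: "topspace ?B = orbit ` S" by (rule topspace_orbit_space)
  have actc: "continuous_map (prod_topology ?G ?X) ?X (\<lambda>(A, x). act A x)"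
  proof -
    have "continuous_on (SO3 \<times> S) (\<lambda>p. act (fst p) (snd p))"
      by (intro cont_act continuous_intros)
    moreover have "(\<lambda>p. act (fst p) (snd p)) ` (SO3 \<times> S) \<subseteq> S" using Sact by auto
    ultimately show ?thesis
      using Sact by (auto simp: continuous_map_in_subtopology case_prod_beta')
  qed
  have sc: "continuous_map ?B ?X s"
  proof (rule continuous_compose_quotient_map[OF q])
    have "continuous_on S (\<lambda>x. act (transpose (F x)) x)"
      by (intro cont_act cont_tr Fc continuous_intros)
    hence "continuous_map ?X ?X (\<lambda>x. act (transpose (F x)) x)"
      using Sact FS SO3_transpose by (auto simp: continuous_map_in_subtopology)
    thus "continuous_map ?X ?X (s \<circ> orbit)"
      by (rule continuous_map_eq) (simp add: s_orbit)
  qed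
  have Fcm: "continuous_map ?X ?G F"
    using Fc FS by (auto simp: continuous_map_in_subtopology)
  define h where "h x = (orbit x, F x)" for x
  define g where "g p = act (snd p) (s (fst p))" for p
  have triv: "homeomorphic_map ?X (prod_topology ?B ?G) h"
  proof -
    have "homeomorphic_maps ?X (prod_topology ?B ?G) h g"
      unfolding homeomorphic_maps_def
    proof (intro conjI ballI)
      show "continuous_map ?X (prod_topology ?B ?G) h"
        unfolding h_def using quotient_imp_continuous_map[OF q] Fcm
        by (simp add: continuous_map_paired)
      have "continuous_map (prod_topology ?B ?G) (prod_topology ?G ?X) (\<lambda>p. (snd p, s (fst p)))"
        apply (rule iffD2[OF continuous_map_paired], rule conjI)
         apply (rule continuous_map_snd)
        using continuous_map_compose[OF continuous_map_fst sc] by (simp add: o_def)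
      hence "continuous_map (prod_topology ?B ?G) ?X ((\<lambda>(A, x). act A x) \<circ> (\<lambda>p. (snd p, s (fst p))))"
        using actc by (rule continuous_map_compose)
      thus "continuous_map (prod_topology ?B ?G) ?X g"
        by (simp add: g_def[abs_def] o_def)
    next
      fix x assume "x \<in> topspace ?X"
      hence x: "x \<in> S" by simp
      show "g (h x) = x" unfolding g_def h_def
        using x FS by (simp add: s_orbit act_act SO3_tr act_id)
    next
      fix p assume "p \<in> topspace (prod_topology ?B ?G)"
      then obtain x A where p: "p = (orbit x, A)" "x \<in> S" "A \<in> SO3"
        using tB by auto
      have "F (s (orbit x)) = transpose (F x) ** F x"
        using p FS SO3_transpose by (simp add: s_orbit Feq)
      also have "\<dots> = mat 1" using FS p by (simp add: SO3_tl)
      finally have "F (s (orbit x)) = mat 1" .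
      thus "h (g p) = p" unfolding g_def h_def using p sS so
        by (simp add: orbit_act Feq)
    qed
    thus ?thesis using homeomorphic_map_maps by blast
  qed
  have hprop: "\<forall>x \<in> topspace ?X. fst (h x) = orbit x \<and> (\<forall>A\<in>SO3. h (act A x) = (orbit x, A ** snd (h x)))"
    by (auto simp: h_def orbit_act Feq)
  have T: "trivial_SO3_bundle ?X act ?B orbit"
    unfolding trivial_SO3_bundle_def using triv hprop by blast
  have P: "principal_SO3_bundle ?X act ?B orbit"
    unfolding principal_SO3_bundle_def
  proof (intro conjI)
    show "\<forall>A\<in>SO3. \<forall>x\<in>topspace ?X. act A x \<in> topspace ?X" using Sact by simp
    show "\<forall>x\<in>topspace ?X. act (mat 1) x = x" by (simp add: act_id)
    show "\<forall>A\<in>SO3. \<forall>A'\<in>SO3. \<forall>x\<in>topspace ?X. act (A ** A') x = act A (act A' x)"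
      by (simp add: act_act)
    show "continuous_map (prod_topology ?G ?X) ?X (\<lambda>(A, x). act A x)" by (rule actc)
    show "quotient_map ?X ?B orbit" by (rule q)
    show "\<forall>x\<in>topspace ?X. \<forall>y\<in>topspace ?X. orbit x = orbit y \<longleftrightarrow> (\<exists>A\<in>SO3. y = act A x)"
      by (simp add: orbit_eq)
    show "\<forall>b\<in>topspace ?B. \<exists>U. openin ?B U \<and> b \<in> U \<and>
        (\<exists>h. homeomorphic_map (subtopology ?X {x \<in> topspace ?X. orbit x \<in> U})
                 (prod_topology (subtopology ?B U) ?G) h \<and>
             (\<forall>x \<in> topspace ?X. orbit x \<in> U \<longrightarrow>
                 fst (h x) = orbit x \<and> (\<forall>A\<in>SO3. h (act A x) = (orbit x, A ** snd (h x)))))"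
    proof
      fix b assume b: "b \<in> topspace ?B"
      have e1: "{x \<in> topspace ?X. orbit x \<in> topspace ?B} = topspace ?X" using tB by auto
      show "\<exists>U. openin ?B U \<and> b \<in> U \<and>
        (\<exists>h. homeomorphic_map (subtopology ?X {x \<in> topspace ?X. orbit x \<in> U})
                 (prod_topology (subtopology ?B U) ?G) h \<and>
             (\<forall>x \<in> topspace ?X. orbit x \<in> U \<longrightarrow>
                 fst (h x) = orbit x \<and> (\<forall>A\<in>SO3. h (act A x) = (orbit x, A ** snd (h x)))))"
        apply (rule exI[of _ "topspace ?B"])
        using b triv hprop by (auto simp only: e1 subtopology_topspace openin_topspace)
    qed
    show "homeomorphic_map (prod_topology ?X ?G)
        (subtopology (prod_topology ?X ?X) ((\<lambda>(x, A). (x, act A x)) ` (topspace ?X \<times> SO3)))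
        (\<lambda>(x, A). (x, act A x))"
    proof -
      let ?f = "\<lambda>(x, A). (x, act A x)"
      let ?T = "?f ` (S \<times> SO3)"
      let ?g = "\<lambda>p. (fst p, F (snd p) ** transpose (F (fst p)))"
      have TS: "?T \<subseteq> S \<times> S" using Sact by auto
      have "homeomorphic_maps (top_of_set (S \<times> SO3)) (top_of_set ?T) ?f ?g"
        unfolding homeomorphic_maps_def
      proof (intro conjI ballI)
        have "continuous_on (S \<times> SO3) (\<lambda>p. (fst p, act (snd p) (fst p)))"
          by (intro cont_act continuous_intros)
        thus "continuous_map (top_of_set (S \<times> SO3)) (top_of_set ?T) ?f"
          by (auto simp: continuous_map_in_subtopology case_prod_beta')
        have c1: "continuous_on ?T (F \<circ> snd)"
          using TS by (intro continuous_on_compose continuous_intros continuous_on_subset[OF Fc]) auto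
        have c2: "continuous_on ?T (F \<circ> fst)"
          using TS by (intro continuous_on_compose continuous_intros continuous_on_subset[OF Fc]) auto
        have "continuous_on ?T ?g"
          using c1 c2 by (intro continuous_intros cont_mm cont_tr) (auto simp: o_def)
        moreover have "?g ` ?T \<subseteq> S \<times> SO3"
          using FS Feq by (auto simp: matrix_mul_assoc[symmetric] SO3_tr intro!: Sact)
        ultimately show "continuous_map (top_of_set ?T) (top_of_set (S \<times> SO3)) ?g"
          by (auto simp: continuous_map_in_subtopology)
      next
        fix p assume "p \<in> topspace (top_of_set (S \<times> SO3))"
        thus "?g (?f p) = p"
          using FS Feq by (auto simp: matrix_mul_assoc[symmetric] SO3_tr)
      next
        fix p assume "p \<in> topspace (top_of_set ?T)"
        thus "?f (?g p) = p"
          using FS Feq by (auto simp: matrix_mul_assoc[symmetric] SO3_tr act_act)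
      qed
      moreover have "subtopology (top_of_set (S \<times> S)) ?T = top_of_set ?T"
        using TS by (simp add: subtopology_subtopology Int_absorb1 Int_absorb2)
      ultimately show ?thesis using homeomorphic_map_maps by (auto simp: prod_topology_subtopology_eu)
    qed
  qed
  show ?thesis using P T sc so tB by auto
qed


definition fe1 :: "real^3 \<Rightarrow> real^3" where "fe1 u = (1 / norm u) *\<^sub>R u"
definition fpp :: "real^3 \<Rightarrow> real^3 \<Rightarrow> real^3" where "fpp u w = w - (w \<bullet> fe1 u) *\<^sub>R fe1 u"
definition fe2 :: "real^3 \<Rightarrow> real^3 \<Rightarrow> real^3" where "fe2 u w = (1 / norm (fpp u w)) *\<^sub>R fpp u w"
definition fe3 :: "real^3 \<Rightarrow> real^3 \<Rightarrow> real^3" where "fe3 u w = cross3 (fe1 u) (fe2 u w)"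
definition fcol :: "real^3 \<Rightarrow> real^3 \<Rightarrow> 3 \<Rightarrow> real^3" where
  "fcol u w j = (if j = 1 then fe1 u else if j = 2 then fe2 u w else fe3 u w)"
definition fr :: "real^3 \<Rightarrow> real^3 \<Rightarrow> real^3^3" where
  "fr u w = (\<chi> i j. fcol u w j $ i)"

lemma fr_equiv:
  assumes A: "A \<in> SO3"
  shows "fr (A *v u) (A *v w) = A ** fr u w"
proof -
  have o: "orthogonal_matrix A" and r: "rotation_matrix A" using A by (auto simp: SO3_def rotation_matrix_def)
  have e1: "fe1 (A *v u) = A *v fe1 u"
    by (simp add: fe1_def orth_norm[OF o] matrix_vector_mult_scaleR)
  have p: "fpp (A *v u) (A *v w) = A *v fpp u w"
    by (simp add: fpp_def e1 orth_inner[OF o] matrix_vector_mult_scaleR matrix_vector_mult_diff_distrib)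
  have e2: "fe2 (A *v u) (A *v w) = A *v fe2 u w"
    by (simp add: fe2_def p orth_norm[OF o] matrix_vector_mult_scaleR)
  have e3: "fe3 (A *v u) (A *v w) = A *v fe3 u w"
    by (simp add: fe3_def e1 e2 cross_rotation_matrix[OF r])
  have c: "fcol (A *v u) (A *v w) j = A *v fcol u w j" for j
    by (simp add: fcol_def e1 e2 e3)
  have m: "(A ** fr u w) $ i $ j = (A *v fcol u w j) $ i" for i j
    by (simp add: matrix_matrix_mult_def matrix_vector_mult_def fr_def)
  show ?thesis
    unfolding fr_def[of "A *v u"] c by (simp add: vec_eq_iff m)
qed

lemma fr_SO3:
  assumes u: "u \<noteq> 0" and p: "fpp u w \<noteq> 0"
  shows "fr u w \<in> SO3"
proof -
  have n1: "norm (fe1 u) = 1" using u by (simp add: fe1_def)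
  have n2: "norm (fe2 u w) = 1" using p by (simp add: fe2_def)
  have i1: "fe1 u \<bullet> fe1 u = 1" using n1 by (simp add: norm_eq_1)
  have o12: "fe1 u \<bullet> fe2 u w = 0"
  proof -
    have "fe1 u \<bullet> fpp u w = 0" using i1 by (simp add: fpp_def inner_diff_right inner_commute)
    thus ?thesis by (simp add: fe2_def)
  qed
  have n3: "norm (fe3 u w) = 1"
  proof -
    have "(norm (fe3 u w))\<^sup>2 = 1" using norm_cross_dot[of "fe1 u" "fe2 u w"] n1 n2 o12
      by (simp add: fe3_def)
    thus ?thesis using norm_ge_zero[of "fe3 u w"] by (auto simp: power2_eq_1_iff)
  qed
  have o13: "fe1 u \<bullet> fe3 u w = 0" and o23: "fe2 u w \<bullet> fe3 u w = 0"
    by (simp_all add: fe3_def dot_cross_self)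
  have col: "column j (fr u w) = fcol u w j" for j
    by (simp add: column_def fr_def vec_eq_iff)
  have orth: "orthogonal_matrix (fr u w)"
    unfolding orthogonal_matrix_orthonormal_columns col
  proof (intro conjI allI impI)
    fix i :: 3 show "norm (fcol u w i) = 1"
      using exhaust_3[of i] n1 n2 n3 by (auto simp: fcol_def)
  next
    fix i j :: 3 assume "i \<noteq> j"
    thus "orthogonal (fcol u w i) (fcol u w j)"
      using exhaust_3[of i] exhaust_3[of j] o12 o13 o23
      by (auto simp: fcol_def orthogonal_def inner_commute)
  qed
  have tr: "transpose (fr u w) = vector [fe1 u, fe2 u w, fe3 u w]"
    by (simp add: vec_eq_iff forall_3 transpose_def fr_def fcol_def vector_3)
  have cyc: "\<And>a b c :: real^3. a \<bullet> cross3 b c = c \<bullet> cross3 a b"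
    by (simp add: cross3_simps)
  have "det (fr u w) = fe1 u \<bullet> cross3 (fe2 u w) (fe3 u w)"
    by (metis det_transpose tr dot_cross_det)
  also have "\<dots> = fe3 u w \<bullet> fe3 u w" by (simp add: cyc fe3_def)
  also have "\<dots> = 1" using n3 by (simp add: norm_eq_1)
  finally show ?thesis using orth by (simp add: SO3_def)
qed


lemma SO3_inj: "A \<in> SO3 \<Longrightarrow> (A *v a = A *v b) \<longleftrightarrow> a = (b::real^3)"
proof
  assume A: "A \<in> SO3" and "A *v a = A *v b"
  hence "transpose A *v (A *v a) = transpose A *v (A *v b)" by simp
  thus "a = b" using A by (simp add: matrix_vector_mul_assoc SO3_tl)
qed simp

lemma SO3_orth: "A \<in> SO3 \<Longrightarrow> orthogonal_matrix A" by (simp add: SO3_def)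

lemma SO3_dist: "A \<in> SO3 \<Longrightarrow> dist (A *v a) (A *v b) = dist a (b::real^3)"
  by (simp add: dist_norm matrix_vector_mult_diff_distrib[symmetric] orth_norm SO3_orth)

lemma SO3_angle: "A \<in> SO3 \<Longrightarrow> vec_angle (A *v a) (A *v b) = vec_angle a b"
  by (simp add: vec_angle_def orth_norm orth_inner SO3_orth)

lemma cont_Amv: "continuous_on S f \<Longrightarrow> continuous_on S (\<lambda>t. A *v (f t :: real^3))"
  by (intro cont_mv continuous_intros)

lemma config_act:
  assumes A: "A \<in> SO3" and cfg: "is_configuration E L Th x \<gamma>"
  shows "is_configuration E L Th (act A x) (\<lambda>v w t. A *v \<gamma> v w t)"
proof -
  note defs = cfg[unfolded is_configuration_def]
  note inj = SO3_inj[OF A]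
  show ?thesis unfolding is_configuration_def
  proof (intro conjI)
    show "\<forall>(v, w)\<in>E.
       continuous_on {0..L (v, w)} (\<lambda>t. A *v \<gamma> v w t) \<and>
       (\<forall>s\<in>{0..L (v, w)}. \<forall>t\<in>{0..L (v, w)}. dist (A *v \<gamma> v w s) (A *v \<gamma> v w t) = \<bar>s - t\<bar>) \<and>
       A *v \<gamma> v w 0 = act A x $ v \<and> A *v \<gamma> v w (L (v, w)) = act A x $ w \<and>
       (\<forall>t\<in>{0..L (v, w)}. A *v \<gamma> w v t = A *v \<gamma> v w (L (v, w) - t))"
      using defs by (auto simp: act_nth SO3_dist[OF A] intro: cont_Amv)
    show "inj (\<lambda>v. act A x $ v)"
      using defs by (auto simp: inj_def act_nth inj)
    show "\<forall>(v, w)\<in>E. \<forall>t\<in>{0<..<L (v, w)}. \<forall>u. A *v \<gamma> v w t \<noteq> act A x $ u"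
      using defs by (auto simp: act_nth inj)
    show "\<forall>(v, w)\<in>E. \<forall>(v', w')\<in>E. \<forall>s\<in>{0<..<L (v, w)}. \<forall>t\<in>{0<..<L (v', w')}.
        A *v \<gamma> v w s = A *v \<gamma> v' w' t \<longrightarrow>
          (v = v' \<and> w = w' \<and> s = t) \<or> (v = w' \<and> w = v' \<and> s = L (v', w') - t)"
      using defs[THEN conjunct2, THEN conjunct2, THEN conjunct2, THEN conjunct1] by (simp only: inj)
    show "\<forall>(v, w1, w2)\<in>E2 E. vec_angle (act A x $ w1 - act A x $ v) (act A x $ w2 - act A x $ v) = Th (v, w1, w2)"
      using defs by (auto simp: act_nth matrix_vector_mult_diff_distrib[symmetric] SO3_angle[OF A])
  qed
qed

lemma CP_act:
  assumes A: "A \<in> SO3" and x: "x \<in> CP E c L Th"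
  shows "act A x \<in> CP E c L Th"
proof -
  obtain \<gamma> where g: "is_configuration E L Th x \<gamma>" and s: "(\<Sum>v\<in>UNIV. real (c v) *\<^sub>R (x $ v)) = 0"
    using x by (auto simp: CP_def)
  have "(\<Sum>v\<in>UNIV. real (c v) *\<^sub>R (act A x $ v)) = A *v (\<Sum>v\<in>UNIV. real (c v) *\<^sub>R (x $ v))"
    by (simp add: act_nth matrix_vector_mult_scaleR linear_sum[OF matrix_vector_mul_linear])
  also have "\<dots> = 0" using s by simp
  finally show ?thesis using config_act[OF A g] by (auto simp: CP_def)
qed


lemma nondeg:
  assumes mg: "molecular_graph E L Th" and t: "(v, w1, w2) \<in> E2 E"
    and ne: "Th (v, w1, w2) \<noteq> pi" and x: "x \<in> CP E c L Th"
  shows "x $ w1 - x $ v \<noteq> 0" "fpp (x $ w1 - x $ v) (x $ w2 - x $ v) \<noteq> 0"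
proof -
  obtain \<gamma> where g: "is_configuration E L Th x \<gamma>" using x by (auto simp: CP_def)
  have inj: "inj (\<lambda>v. x $ v)" using g by (simp add: is_configuration_def)
  have ang: "vec_angle (x $ w1 - x $ v) (x $ w2 - x $ v) = Th (v, w1, w2)"
    using g t unfolding is_configuration_def by fast
  have e: "(v, w1) \<in> E" "(v, w2) \<in> E" "w1 \<noteq> w2" using t by (auto simp: E2_def)
  have "(v, v) \<notin> E" using mg by (simp add: molecular_graph_def)
  hence vw: "v \<noteq> w1" "v \<noteq> w2" using e by auto
  have th: "0 < Th (v, w1, w2)" "Th (v, w1, w2) < pi"
    using mg t ne unfolding molecular_graph_def by fastforce+
  define u where "u = x $ w1 - x $ v"
  define w where "w = x $ w2 - x $ v"
  have u0: "u \<noteq> 0" using inj vw by (auto simp: u_def inj_def)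
  have w0: "w \<noteq> 0" using inj vw by (auto simp: w_def inj_def)
  show "x $ w1 - x $ v \<noteq> 0" using u0 by (simp add: u_def)
  show "fpp (x $ w1 - x $ v) (x $ w2 - x $ v) \<noteq> 0"
  proof
    assume "fpp (x $ w1 - x $ v) (x $ w2 - x $ v) = 0"
    hence p: "fpp u w = 0" by (simp add: u_def w_def)
    define k where "k = w \<bullet> fe1 u"
    have wk: "w = k *\<^sub>R fe1 u" using p by (simp add: fpp_def k_def)
    have ue: "u = norm u *\<^sub>R fe1 u" using u0 by (simp add: fe1_def)
    have "norm (fe1 u) = 1" using u0 by (simp add: fe1_def)
    hence n1: "fe1 u \<bullet> fe1 u = 1" by (simp add: norm_eq_1)
    have k0: "k \<noteq> 0" using wk w0 by auto
    have uw: "u \<bullet> w = norm u * k"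
      by (subst ue, subst wk) (simp add: n1)
    have nw: "norm w = \<bar>k\<bar>" using wk u0 by (simp add: fe1_def)
    have r: "(u \<bullet> w) / (norm u * norm w) = k / \<bar>k\<bar>" using uw nw u0 by simp
    have "vec_angle u w = Th (v, w1, w2)" using ang by (simp add: u_def w_def)
    hence "arccos (k / \<bar>k\<bar>) = Th (v, w1, w2)" by (simp add: vec_angle_def r)
    moreover have "k / \<bar>k\<bar> = 1 \<or> k / \<bar>k\<bar> = -1" using k0 by (cases "k > 0") auto
    ultimately show False using th by auto
  qed
qed

lemma cont_fr:
  fixes S :: "'a::t2_space set"
  assumes U: "continuous_on S U" and W: "continuous_on S W"
    and nz: "\<And>x. x \<in> S \<Longrightarrow> U x \<noteq> 0 \<and> fpp (U x) (W x) \<noteq> 0"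
  shows "continuous_on S (\<lambda>x. fr (U x) (W x))"
proof -
  have c1: "continuous_on S (\<lambda>x. fe1 (U x))"
    unfolding fe1_def using nz by (intro continuous_intros U) auto
  have cp: "continuous_on S (\<lambda>x. fpp (U x) (W x))"
    unfolding fpp_def by (intro continuous_intros W c1)
  have c2: "continuous_on S (\<lambda>x. fe2 (U x) (W x))"
    unfolding fe2_def using nz by (intro continuous_intros cp) auto
  have c3: "continuous_on S (\<lambda>x. fe3 (U x) (W x))"
    unfolding fe3_def by (intro continuous_on_cross c1 c2)
  have cc: "continuous_on S (\<lambda>x. fcol (U x) (W x) j)" for j
    using exhaust_3[of j] c1 c2 c3 by (auto simp: fcol_def)
  show ?thesis unfolding fr_def
    by (intro continuous_on_vec_lambda continuous_on_component cc)
qed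


theorem mainTheorem3:
  fixes E :: "('v::finite \<times> 'v) set"
    and c :: "'v \<Rightarrow> nat"
    and L :: "'v \<times> 'v \<Rightarrow> real"
    and Th :: "'v \<times> 'v \<times> 'v \<Rightarrow> real"
  assumes "molecular_graph E L Th"
    and "\<exists>(v, w1, w2) \<in> E2 E. Th (v, w1, w2) \<noteq> pi"
  shows "principal_SO3_bundle (top_of_set (CP E c L Th)) act
           (orbit_space_topology (CP E c L Th)) orbit
       \<and> trivial_SO3_bundle (top_of_set (CP E c L Th)) act
           (orbit_space_topology (CP E c L Th)) orbit
       \<and> (\<exists>s. continuous_map (orbit_space_topology (CP E c L Th)) (top_of_set (CP E c L Th)) s
              \<and> (\<forall>b \<in> topspace (orbit_space_topology (CP E c L Th)). orbit (s b) = b))"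
proof -
  obtain v w1 w2 where t: "(v, w1, w2) \<in> E2 E" and ne: "Th (v, w1, w2) \<noteq> pi"
    using assms(2) by auto
  note nd = nondeg[OF assms(1) t ne]
  define F where "F x = fr (x $ w1 - x $ v) (x $ w2 - x $ v)" for x :: "(real^3)^'v"
  show ?thesis
  proof (rule abstract_bundle)
    show "\<And>A x. A \<in> SO3 \<Longrightarrow> x \<in> CP E c L Th \<Longrightarrow> act A x \<in> CP E c L Th"
      by (rule CP_act)
    show "continuous_on (CP E c L Th) F"
      unfolding F_def using nd by (intro cont_fr continuous_intros) auto
    show "\<And>x. x \<in> CP E c L Th \<Longrightarrow> F x \<in> SO3"
      unfolding F_def using nd by (intro fr_SO3) auto
    show "\<And>A x. A \<in> SO3 \<Longrightarrow> x \<in> CP E c L Th \<Longrightarrow> F (act A x) = A ** F x"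
      unfolding F_def by (simp add: act_nth matrix_vector_mult_diff_distrib[symmetric] fr_equiv)
  qed
qed

end
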